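(* Let $b,\beta_1,\beta_2,\gamma,\alpha,\lambda,\varepsilon_1,\varepsilon_2$ be positive real numbers, $\beta=\beta_1+\beta_2$, and consider the system $$s'=b-(b+\beta)s+\gamma r+(\varepsilon_1-\lambda)is+\varepsilon_2 rs,$$ $$i'=\beta_1 s-(b+\varepsilon_1+\alpha)i+\lambda is+\varepsilon_1 i^2+\varepsilon_2 ir,$$ $$r'=\beta_2 s-(b+\varepsilon_2+\gamma)r+\alpha i+\varepsilon_1 ir+\varepsilon_2 r^2.$$ Let $D=\{(s,i,r): s+i+r=1,\ s\ge0,\ i\ge0,\ r\ge0\}$ with relative interior $\overset{o}{D}$. Then this system has no source in $\overset{o}{D}$.
   Context: The plane $s+i+r=1$ is invariant for this system, so on it the dynamics is two-dimensional (equivalently given by substituting $r=1-s-i$). A source is a rest point at which all eigenvalues of the linearization of this (restricted, two-dimensional) system have positive real parts. *)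

theory Defs
  imports "HOL-Analysis.Analysis"
begin

definition sdot :: "real \<Rightarrow> real \<Rightarrow> real \<Rightarrow> real \<Rightarrow> real \<Rightarrow> real \<Rightarrow> real \<Rightarrow> real \<Rightarrow> real \<Rightarrow> real \<Rightarrow> real \<Rightarrow> real" where
  "sdot b \<beta>1 \<beta>2 \<gamma> \<alpha> lam \<epsilon>1 \<epsilon>2 s i r =
     b - (b + (\<beta>1 + \<beta>2)) * s + \<gamma> * r + (\<epsilon>1 - lam) * i * s + \<epsilon>2 * r * s"

definition idot :: "real \<Rightarrow> real \<Rightarrow> real \<Rightarrow> real \<Rightarrow> real \<Rightarrow> real \<Rightarrow> real \<Rightarrow> real \<Rightarrow> real \<Rightarrow> real \<Rightarrow> real \<Rightarrow> real" where
  "idot b \<beta>1 \<beta>2 \<gamma> \<alpha> lam \<epsilon>1 \<epsilon>2 s i r =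
     \<beta>1 * s - (b + \<epsilon>1 + \<alpha>) * i + lam * i * s + \<epsilon>1 * i^2 + \<epsilon>2 * i * r"

definition rdot :: "real \<Rightarrow> real \<Rightarrow> real \<Rightarrow> real \<Rightarrow> real \<Rightarrow> real \<Rightarrow> real \<Rightarrow> real \<Rightarrow> real \<Rightarrow> real \<Rightarrow> real \<Rightarrow> real" where
  "rdot b \<beta>1 \<beta>2 \<gamma> \<alpha> lam \<epsilon>1 \<epsilon>2 s i r =
     \<beta>2 * s - (b + \<epsilon>2 + \<gamma>) * r + \<alpha> * i + \<epsilon>1 * i * r + \<epsilon>2 * r^2"

definition restricted_field ::
  "real \<Rightarrow> real \<Rightarrow> real \<Rightarrow> real \<Rightarrow> real \<Rightarrow> real \<Rightarrow> real \<Rightarrow> real \<Rightarrow> real \<times> real \<Rightarrow> real \<times> real" where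
  "restricted_field b \<beta>1 \<beta>2 \<gamma> \<alpha> lam \<epsilon>1 \<epsilon>2 = (\<lambda>(s, i).
     (sdot b \<beta>1 \<beta>2 \<gamma> \<alpha> lam \<epsilon>1 \<epsilon>2 s i (1 - s - i),
      idot b \<beta>1 \<beta>2 \<gamma> \<alpha> lam \<epsilon>1 \<epsilon>2 s i (1 - s - i)))"

definition eigenvalues_lin2 :: "(real \<times> real \<Rightarrow> real \<times> real) \<Rightarrow> complex set" where
  "eigenvalues_lin2 L =
     (let a = fst (L (1, 0)); c = snd (L (1, 0));
          bb = fst (L (0, 1)); d = snd (L (0, 1))
      in {z. (z - complex_of_real a) * (z - complex_of_real d)
               - complex_of_real bb * complex_of_real c = 0})"

definition is_source :: "(real \<times> real \<Rightarrow> real \<times> real) \<Rightarrow> real \<times> real \<Rightarrow> bool" where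
  "is_source F p \<longleftrightarrow> F p = (0, 0) \<and>
     (\<exists>L. (F has_derivative L) (at p) \<and> (\<forall>z \<in> eigenvalues_lin2 L. Re z > 0))"

end

theory Submission
  imports Defs
begin

lemma eig_trace:
  fixes a bb c d :: real
  assumes "\<forall>z \<in> {z. (z - complex_of_real a) * (z - complex_of_real d) - complex_of_real bb * complex_of_real c = 0}. Re z > 0"
  shows "a + d > 0"
proof (rule ccontr)
  assume T: "\<not> a + d > 0"
  define disc where "disc = (a - d)^2 + 4*bb*c"
  show False
  proof (cases "disc \<ge> 0")
    case True
    define z where "z = complex_of_real ((a + d - sqrt disc)/2)"
    have sq: "sqrt disc * sqrt disc = disc" using True by simp
    have "(z - complex_of_real a) * (z - complex_of_real d) - complex_of_real bb * complex_of_real c = 0"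
      unfolding z_def of_real_diff[symmetric] of_real_mult[symmetric]
      apply (subst of_real_eq_0_iff) using sq unfolding disc_def by (simp add: field_simps power2_eq_square)
    moreover have "Re z \<le> 0"
    proof -
      have h1: "sqrt disc \<ge> 0" using True by simp
      have h2: "Re z = (a + d - sqrt disc)/2" unfolding z_def by simp
      have "a + d - sqrt disc \<le> 0" using h1 T by linarith
      then show ?thesis unfolding h2 by simp
    qed
    ultimately show False using assms by force
  next
    case False
    define z where "z = Complex ((a + d)/2) (sqrt (-disc)/2)"
    have sq: "sqrt (-disc) * sqrt (-disc) = -disc" using False by simp
    have "(z - complex_of_real a) * (z - complex_of_real d) - complex_of_real bb * complex_of_real c = 0"
      unfolding z_def using sq unfolding disc_def by (simp add: complex_eq_iff field_simps power2_eq_square)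
    moreover have "Re z \<le> 0" unfolding z_def using T by simp
    ultimately show False using assms by force
  qed
qed

lemma deriv:
  "(restricted_field b \<beta>1 \<beta>2 \<gamma> \<alpha> lam \<epsilon>1 \<epsilon>2 has_derivative
    (\<lambda>(x,y). ((-(b+\<beta>1+\<beta>2) - \<gamma> + (\<epsilon>1-lam)*i + \<epsilon>2*((1-s-i) - s))*x + (-\<gamma> + (\<epsilon>1-lam)* s - \<epsilon>2* s)*y,
              (\<beta>1 + lam*i - \<epsilon>2*i)*x + (-(b+\<epsilon>1+\<alpha>) + lam* s + 2*\<epsilon>1*i + \<epsilon>2*((1-s-i)-i))*y))) (at (s,i))"
proof -
  have e: "restricted_field b \<beta>1 \<beta>2 \<gamma> \<alpha> lam \<epsilon>1 \<epsilon>2 = (\<lambda>p.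
     (sdot b \<beta>1 \<beta>2 \<gamma> \<alpha> lam \<epsilon>1 \<epsilon>2 (fst p) (snd p) (1 - fst p - snd p),
      idot b \<beta>1 \<beta>2 \<gamma> \<alpha> lam \<epsilon>1 \<epsilon>2 (fst p) (snd p) (1 - fst p - snd p)))"
    unfolding restricted_field_def by (auto simp: fun_eq_iff)
  show ?thesis unfolding e sdot_def idot_def
    apply (rule has_derivative_eq_rhs)
     apply (rule derivative_eq_intros | simp)+
    apply (auto simp: fun_eq_iff algebra_simps power2_eq_square)
    done
qed

theorem corollary2p4:
  fixes b \<beta>1 \<beta>2 \<gamma> \<alpha> lam \<epsilon>1 \<epsilon>2 :: real
  assumes "b > 0" "\<beta>1 > 0" "\<beta>2 > 0" "\<gamma> > 0" "\<alpha> > 0" "lam > 0" "\<epsilon>1 > 0" "\<epsilon>2 > 0"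
  shows "\<not> (\<exists>s i. s > 0 \<and> i > 0 \<and> 1 - s - i > 0 \<and>
            is_source (restricted_field b \<beta>1 \<beta>2 \<gamma> \<alpha> lam \<epsilon>1 \<epsilon>2) (s, i))"
proof
  assume "\<exists>s i. s > 0 \<and> i > 0 \<and> 1 - s - i > 0 \<and>
            is_source (restricted_field b \<beta>1 \<beta>2 \<gamma> \<alpha> lam \<epsilon>1 \<epsilon>2) (s, i)"
  then obtain s i L where s: "s > 0" and i: "i > 0" and r: "1 - s - i > 0"
    and F0: "restricted_field b \<beta>1 \<beta>2 \<gamma> \<alpha> lam \<epsilon>1 \<epsilon>2 (s, i) = (0, 0)"
    and dL: "(restricted_field b \<beta>1 \<beta>2 \<gamma> \<alpha> lam \<epsilon>1 \<epsilon>2 has_derivative L) (at (s, i))"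
    and ev: "\<forall>z \<in> eigenvalues_lin2 L. Re z > 0"
    unfolding is_source_def by blast
  define r where "r = 1 - s - i"
  have rp: "r > 0" using r r_def by simp
  define f where "f = sdot b \<beta>1 \<beta>2 \<gamma> \<alpha> lam \<epsilon>1 \<epsilon>2 s i r"
  define g where "g = idot b \<beta>1 \<beta>2 \<gamma> \<alpha> lam \<epsilon>1 \<epsilon>2 s i r"
  have f0: "f = 0" and g0: "g = 0" using F0 unfolding f_def g_def r_def restricted_field_def by auto
  have L: "L = (\<lambda>(x,y). ((-(b+\<beta>1+\<beta>2) - \<gamma> + (\<epsilon>1-lam)*i + \<epsilon>2*((1-s-i) - s))*x + (-\<gamma> + (\<epsilon>1-lam)* s - \<epsilon>2* s)*y,
              (\<beta>1 + lam*i - \<epsilon>2*i)*x + (-(b+\<epsilon>1+\<alpha>) + lam* s + 2*\<epsilon>1*i + \<epsilon>2*((1-s-i)-i))*y))"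
    by (rule has_derivative_unique[OF dL deriv])
  have tr: "(-(b+\<beta>1+\<beta>2) - \<gamma> + (\<epsilon>1-lam)*i + \<epsilon>2*((1-s-i) - s)) + (-(b+\<epsilon>1+\<alpha>) + lam* s + 2*\<epsilon>1*i + \<epsilon>2*((1-s-i)-i)) > 0"
    using eig_trace[of "fst (L (1,0))" "snd (L (0,1))" "fst (L (0,1))" "snd (L (1,0))"] ev
    unfolding eigenvalues_lin2_def Let_def by (simp add: L)
  define tr where "tr = (-(b+\<beta>1+\<beta>2) - \<gamma> + (\<epsilon>1-lam)*i + \<epsilon>2*((1-s-i) - s)) + (-(b+\<epsilon>1+\<alpha>) + lam * s + 2*\<epsilon>1*i + \<epsilon>2*((1-s-i)-i))"
  have id: "tr * (s*i*r) = f*i*r + g* s*r - (f+g)* s*i + (b*(s-1)*i*r - \<gamma>*r*r*i - \<beta>1* s* s*r - \<beta>2* s* s*i - \<alpha>*i*i* s)"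
    unfolding tr_def f_def g_def sdot_def idot_def r_def by algebra
  have "b*(s-1)*i*r \<le> 0" using s i rp r_def \<open>b > 0\<close> by (simp add: mult_nonneg_nonpos mult_nonpos_nonneg)
  moreover have "\<gamma>*r*r*i > 0" "\<beta>1* s* s*r > 0" "\<beta>2* s* s*i > 0" "\<alpha>*i*i* s > 0"
    using s i rp assms by auto
  moreover have "tr * (s*i*r) = b*(s-1)*i*r - \<gamma>*r*r*i - \<beta>1* s* s*r - \<beta>2* s* s*i - \<alpha>*i*i* s"
    using id f0 g0 by simp
  ultimately have "tr * (s*i*r) < 0" by linarith
  moreover have "s*i*r > 0" using s i rp by auto
  ultimately have "tr < 0" by (metis mult_nonneg_nonneg not_less less_imp_le)
  then show False using tr tr_def by linarith
qed

end
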